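(* Let $\mathcal{C}$ be a d-category. For every $\mathcal{C}$-language $L$ there exists a $\mathcal{C}$-automaton $X$ with $\mathrm{Lang}(X)=L$. (Conversely, $\mathrm{Lang}(X)$ is a $\mathcal{C}$-language for every $\mathcal{C}$-automaton $X$.)
   Context: A d-category is a small category $\mathcal{C}$ with wide subcategories $\mathcal{C}^+$ (formorphisms) and $\mathcal{C}^-$ (backmorphisms) such that an invertible $\varphi$ is in $\mathcal{C}^+$ iff $\varphi^{-1}\in\mathcal{C}^-$. A $\mathcal{C}$-automaton is a presheaf $X:\mathcal{C}^{op}\to\mathbf{Set}$ with sets of start and accept elements (elements are pairs $(U,x)$, $x\in X[U]$); morphisms of automata are presheaf maps preserving start and accept elements. A linear category is a bipointed d-category isomorphic to a finite (possibly empty) concatenation (gluing $\top$ to $\bot$) of $\mathbf S$ (formorphism $\bot\to\top$), $\mathbf T$ (backmorphism $\top\to\bot$), $\mathbf I$ (inverse pair); a path is a d-functor $\omega:\mathcal I\to\mathcal{C}$ from one; its track object is $\operatorname{colim}_i\mathcal{C}(-,\omega(i))$ with single start element the image of $\mathrm{id}_{\omega(\bot)}$ and single accept element the image of $\mathrm{id}_{\omega(\top)}$; a track object is an automaton isomorphic to such. For track objects, $\Delta\sqsubseteq\Gamma$ if there is a morphism of automata $\Delta\to\Gamma$. A $\mathcal{C}$-language is a class $L$ of track objects that is down-closed: $\Gamma\in L$ and $\Delta\sqsubseteq\Gamma$ imply $\Delta\in L$. $\mathrm{Lang}(X)$ is the class of track objects $\Gamma$ admitting a morphism of automata $\Gamma\to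 X$. *)

theory Defs
  imports Main
begin

text \<open>A small category with objects of type 'o and morphisms of type 'm.
  cmp g f is the composite g o f (first f, then g).\<close>

record ('o, 'm) dcat =
  obj :: "'o set"
  mor :: "'m set"
  src :: "'m \<Rightarrow> 'o"
  tgt :: "'m \<Rightarrow> 'o"
  cmp :: "'m \<Rightarrow> 'm \<Rightarrow> 'm"
  ide :: "'o \<Rightarrow> 'm"
  fwd :: "'m set"
  bwd :: "'m set"

definition hom :: "('o, 'm) dcat \<Rightarrow> 'o \<Rightarrow> 'o \<Rightarrow> 'm set" where
  "hom C a b = {f \<in> mor C. src C f = a \<and> tgt C f = b}"

definition category :: "('o, 'm) dcat \<Rightarrow> bool" where
  "category C \<longleftrightarrow>
     (\<forall>f \<in> mor C. src C f \<in> obj C \<and> tgt C f \<in> obj C) \<and>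
     (\<forall>a \<in> obj C. ide C a \<in> hom C a a) \<and>
     (\<forall>f \<in> mor C. \<forall>g \<in> mor C. tgt C f = src C g \<longrightarrow>
          cmp C g f \<in> hom C (src C f) (tgt C g)) \<and>
     (\<forall>f \<in> mor C. cmp C f (ide C (src C f)) = f \<and> cmp C (ide C (tgt C f)) f = f) \<and>
     (\<forall>f \<in> mor C. \<forall>g \<in> mor C. \<forall>h \<in> mor C.
          tgt C f = src C g \<longrightarrow> tgt C g = src C h \<longrightarrow>
          cmp C h (cmp C g f) = cmp C (cmp C h g) f)"

definition wide_subcat :: "('o, 'm) dcat \<Rightarrow> 'm set \<Rightarrow> bool" where
  "wide_subcat C S \<longleftrightarrow> S \<subseteq> mor C \<and> (\<forall>a \<in> obj C. ide C a \<in> S) \<and>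
     (\<forall>f \<in> S. \<forall>g \<in> S. tgt C f = src C g \<longrightarrow> cmp C g f \<in> S)"

definition inverse_of :: "('o, 'm) dcat \<Rightarrow> 'm \<Rightarrow> 'm \<Rightarrow> bool" where
  "inverse_of C g f \<longleftrightarrow> f \<in> mor C \<and> g \<in> mor C \<and> src C g = tgt C f \<and> tgt C g = src C f \<and>
     cmp C g f = ide C (src C f) \<and> cmp C f g = ide C (tgt C f)"

definition dcategory :: "('o, 'm) dcat \<Rightarrow> bool" where
  "dcategory C \<longleftrightarrow> category C \<and> wide_subcat C (fwd C) \<and> wide_subcat C (bwd C) \<and>
     (\<forall>f g. inverse_of C g f \<longrightarrow> (f \<in> fwd C \<longleftrightarrow> g \<in> bwd C))"

definition dfunctor :: "('o1, 'm1) dcat \<Rightarrow> ('o2, 'm2) dcat \<Rightarrow> ('o1 \<Rightarrow> 'o2) \<Rightarrow> ('m1 \<Rightarrow> 'm2) \<Rightarrow> bool" where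
  "dfunctor A B Fo Fm \<longleftrightarrow>
     (\<forall>a \<in> obj A. Fo a \<in> obj B) \<and>
     (\<forall>f \<in> mor A. Fm f \<in> hom B (Fo (src A f)) (Fo (tgt A f))) \<and>
     (\<forall>a \<in> obj A. Fm (ide A a) = ide B (Fo a)) \<and>
     (\<forall>f \<in> mor A. \<forall>g \<in> mor A. tgt A f = src A g \<longrightarrow> Fm (cmp A g f) = cmp B (Fm g) (Fm f)) \<and>
     (\<forall>f \<in> fwd A. Fm f \<in> fwd B) \<and> (\<forall>f \<in> bwd A. Fm f \<in> bwd B)"

text \<open>Car X U is the set X[U]; Act X f maps X[V] to X[U] for f : U -> V.
  Elements are pairs (U, x) with x in X[U].\<close>

record ('o, 'm, 'e) automaton =
  Car :: "'o \<Rightarrow> 'e set"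
  Act :: "'m \<Rightarrow> 'e \<Rightarrow> 'e"
  Start :: "('o \<times> 'e) set"
  Accept :: "('o \<times> 'e) set"

definition elements :: "('o, 'm) dcat \<Rightarrow> ('o, 'm, 'e) automaton \<Rightarrow> ('o \<times> 'e) set" where
  "elements C X = {(U, x). U \<in> obj C \<and> x \<in> Car X U}"

definition presheaf :: "('o, 'm) dcat \<Rightarrow> ('o, 'm, 'e) automaton \<Rightarrow> bool" where
  "presheaf C X \<longleftrightarrow>
     (\<forall>f \<in> mor C. \<forall>x \<in> Car X (tgt C f). Act X f x \<in> Car X (src C f)) \<and>
     (\<forall>a \<in> obj C. \<forall>x \<in> Car X a. Act X (ide C a) x = x) \<and>
     (\<forall>f \<in> mor C. \<forall>g \<in> mor C. tgt C f = src C g \<longrightarrow>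
        (\<forall>x \<in> Car X (tgt C g). Act X (cmp C g f) x = Act X f (Act X g x)))"

definition automaton :: "('o, 'm) dcat \<Rightarrow> ('o, 'm, 'e) automaton \<Rightarrow> bool" where
  "automaton C X \<longleftrightarrow> presheaf C X \<and> Start X \<subseteq> elements C X \<and> Accept X \<subseteq> elements C X"

definition aut_mor :: "('o, 'm) dcat \<Rightarrow> ('o, 'm, 'e) automaton \<Rightarrow> ('o, 'm, 'f) automaton
    \<Rightarrow> ('o \<Rightarrow> 'e \<Rightarrow> 'f) \<Rightarrow> bool" where
  "aut_mor C X Y \<eta> \<longleftrightarrow>
     (\<forall>U \<in> obj C. \<forall>x \<in> Car X U. \<eta> U x \<in> Car Y U) \<and>
     (\<forall>f \<in> mor C. \<forall>x \<in> Car X (tgt C f).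
        \<eta> (src C f) (Act X f x) = Act Y f (\<eta> (tgt C f) x)) \<and>
     (\<forall>(U, x) \<in> Start X. (U, \<eta> U x) \<in> Start Y) \<and>
     (\<forall>(U, x) \<in> Accept X. (U, \<eta> U x) \<in> Accept Y)"

definition aut_iso :: "('o, 'm) dcat \<Rightarrow> ('o, 'm, 'e) automaton \<Rightarrow> ('o, 'm, 'f) automaton \<Rightarrow> bool" where
  "aut_iso C X Y \<longleftrightarrow> (\<exists>\<eta> \<theta>. aut_mor C X Y \<eta> \<and> aut_mor C Y X \<theta> \<and>
     (\<forall>U \<in> obj C. \<forall>x \<in> Car X U. \<theta> U (\<eta> U x) = x) \<and>
     (\<forall>U \<in> obj C. \<forall>y \<in> Car Y U. \<eta> U (\<theta> U y) = y))"

datatype letter = S | T | I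

text \<open>The concatenation of the word w of copies of S, T, I (glueing top to bottom).
  Its objects are 0, ..., length w (bottom = 0, top = length w); it is thin, with a
  (unique) morphism (i,j) from i to j iff reach w i j.  The k-th letter relates k and k+1:
  S gives a formorphism k -> k+1, T a backmorphism k+1 -> k, I an inverse pair
  (formorphism k -> k+1, backmorphism k+1 -> k).\<close>

definition reach :: "letter list \<Rightarrow> nat \<Rightarrow> nat \<Rightarrow> bool" where
  "reach w i j \<longleftrightarrow>
     (i \<le> j \<and> (\<forall>k. i \<le> k \<and> k < j \<longrightarrow> w ! k \<in> {S, I})) \<or>
     (j \<le> i \<and> (\<forall>k. j \<le> k \<and> k < i \<longrightarrow> w ! k \<in> {T, I}))"

definition lin :: "letter list \<Rightarrow> (nat, nat \<times> nat) dcat" where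
  "lin w = \<lparr> obj = {0..length w},
             mor = {(i, j). i \<le> length w \<and> j \<le> length w \<and> reach w i j},
             src = fst, tgt = snd,
             cmp = (\<lambda>g f. (fst f, snd g)),
             ide = (\<lambda>i. (i, i)),
             fwd = {(i, j). i \<le> length w \<and> j \<le> length w \<and> reach w i j \<and> i \<le> j},
             bwd = {(i, j). i \<le> length w \<and> j \<le> length w \<and> reach w i j \<and> j \<le> i} \<rparr>"

definition path :: "('o, 'm) dcat \<Rightarrow> letter list \<Rightarrow> (nat \<Rightarrow> 'o) \<Rightarrow> (nat \<times> nat \<Rightarrow> 'm) \<Rightarrow> bool" where
  "path C w Fo Fm \<longleftrightarrow> dfunctor (lin w) C Fo Fm"

text \<open>The colimit of the representables C(-, omega(i)), computed pointwise:
  at U it is the set of pairs (i, f) with f : U -> omega(i), modulo the equivalence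
  relation generated by (i, f) ~ (j, omega(i,j) o f).\<close>

definition track_gen :: "('o, 'm) dcat \<Rightarrow> letter list \<Rightarrow> (nat \<Rightarrow> 'o) \<Rightarrow> (nat \<times> nat \<Rightarrow> 'm)
    \<Rightarrow> ((nat \<times> 'm) \<times> (nat \<times> 'm)) set" where
  "track_gen C w Fo Fm = {((i, f), (j, g)). f \<in> mor C \<and> tgt C f = Fo i \<and>
       (i, j) \<in> mor (lin w) \<and> g = cmp C (Fm (i, j)) f}"

definition track_rel :: "('o, 'm) dcat \<Rightarrow> letter list \<Rightarrow> (nat \<Rightarrow> 'o) \<Rightarrow> (nat \<times> nat \<Rightarrow> 'm)
    \<Rightarrow> ((nat \<times> 'm) \<times> (nat \<times> 'm)) set" where
  "track_rel C w Fo Fm = (track_gen C w Fo Fm \<union> (track_gen C w Fo Fm)\<inverse>)\<^sup>*"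

definition track_of :: "('o, 'm) dcat \<Rightarrow> letter list \<Rightarrow> (nat \<Rightarrow> 'o) \<Rightarrow> (nat \<times> nat \<Rightarrow> 'm)
    \<Rightarrow> ('o, 'm, (nat \<times> 'm) set) automaton" where
  "track_of C w Fo Fm =
     (let R = track_rel C w Fo Fm; n = length w in
      \<lparr> Car = (\<lambda>U. if U \<in> obj C
                     then {(i, f). i \<le> n \<and> f \<in> hom C U (Fo i)} // R else {}),
        Act = (\<lambda>g e. R `` ((\<lambda>(i, f). (i, cmp C f g)) ` e)),
        Start = {(Fo 0, R `` {(0, ide C (Fo 0))})},
        Accept = {(Fo n, R `` {(n, ide C (Fo n))})} \<rparr>)"

definition is_track :: "('o, 'm) dcat \<Rightarrow> ('o, 'm, 'e) automaton \<Rightarrow> bool" where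
  "is_track C X \<longleftrightarrow> automaton C X \<and>
     (\<exists>w Fo Fm. path C w Fo Fm \<and> aut_iso C X (track_of C w Fo Fm))"

definition sqsub :: "('o, 'm) dcat \<Rightarrow> ('o, 'm, 'e) automaton \<Rightarrow> ('o, 'm, 'f) automaton \<Rightarrow> bool" where
  "sqsub C D G \<longleftrightarrow> (\<exists>\<eta>. aut_mor C D G \<eta>)"

definition is_language :: "('o, 'm) dcat \<Rightarrow> ('o, 'm, 'e) automaton set \<Rightarrow> bool" where
  "is_language C L \<longleftrightarrow> (\<forall>G \<in> L. is_track C G) \<and>
     (\<forall>G \<in> L. \<forall>D. is_track C D \<and> sqsub C D G \<longrightarrow> D \<in> L)"

definition Lang :: "('o, 'm) dcat \<Rightarrow> ('o, 'm, 'x) automaton \<Rightarrow> ('o, 'm, 'e) automaton set" where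
  "Lang C X = {G. is_track C G \<and> (\<exists>\<eta>. aut_mor C G X \<eta>)}"

end

theory Submission
  imports Defs
begin

lemma lin_mor: "(i,j) \<in> mor (lin w) \<longleftrightarrow> i \<le> length w \<and> j \<le> length w \<and> reach w i j"
  by (simp add: lin_def)

lemma path_Fm: "path C w Fo Fm \<Longrightarrow> (i,j) \<in> mor (lin w) \<Longrightarrow> Fm (i,j) \<in> hom C (Fo i) (Fo j)"
  unfolding path_def dfunctor_def by (auto simp: lin_def)

lemma path_Fo: "path C w Fo Fm \<Longrightarrow> i \<le> length w \<Longrightarrow> Fo i \<in> obj C"
  unfolding path_def dfunctor_def by (auto simp: lin_def)

lemma track_rel_sym: "(a,b) \<in> track_rel C w Fo Fm \<Longrightarrow> (b,a) \<in> track_rel C w Fo Fm"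
proof -
  let ?G = "track_gen C w Fo Fm"
  assume "(a,b) \<in> track_rel C w Fo Fm"
  hence "(b,a) \<in> ((?G \<union> ?G\<inverse>)\<inverse>)\<^sup>*" unfolding track_rel_def by (simp add: rtrancl_converseI)
  moreover have "(?G \<union> ?G\<inverse>)\<inverse> = ?G \<union> ?G\<inverse>" by auto
  ultimately show ?thesis unfolding track_rel_def by simp
qed

lemma track_rel_trans: "(a,b) \<in> track_rel C w Fo Fm \<Longrightarrow> (b,c) \<in> track_rel C w Fo Fm \<Longrightarrow> (a,c) \<in> track_rel C w Fo Fm"
  unfolding track_rel_def by (rule rtrancl_trans)

lemma track_rel_refl: "(a,a) \<in> track_rel C w Fo Fm"
  unfolding track_rel_def by simp

lemma track_rel_class: "(a,b) \<in> track_rel C w Fo Fm \<Longrightarrow> track_rel C w Fo Fm `` {a} = track_rel C w Fo Fm `` {b}"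
  using track_rel_sym track_rel_trans by blast

lemma gen_in_rel: "(a,b) \<in> track_gen C w Fo Fm \<Longrightarrow> (a,b) \<in> track_rel C w Fo Fm"
  unfolding track_rel_def by auto

definition Pinv where
  "Pinv C w Fo s = (\<lambda>(i,g). i \<le> length w \<and> g \<in> mor C \<and> tgt C g = Fo i \<and> src C g = s)"

lemma gen_step_P:
  assumes cat: "category C" and p: "path C w Fo Fm"
    and st: "(b,c) \<in> track_gen C w Fo Fm \<union> (track_gen C w Fo Fm)\<inverse>"
    and Pb: "Pinv C w Fo s b"
  shows "Pinv C w Fo s c"
  using st
proof
  assume "(b,c) \<in> track_gen C w Fo Fm"
  then obtain i g j where b: "b = (i,g)" and c: "c = (j, cmp C (Fm (i,j)) g)"
    and g: "g \<in> mor C" "tgt C g = Fo i" and ij: "(i,j) \<in> mor (lin w)"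
    unfolding track_gen_def by auto
  have m: "Fm (i,j) \<in> hom C (Fo i) (Fo j)" using path_Fm[OF p ij] .
  have "cmp C (Fm (i,j)) g \<in> hom C (src C g) (tgt C (Fm (i,j)))"
    using cat g m unfolding category_def hom_def by auto
  then show ?thesis using Pb ij m unfolding b c Pinv_def hom_def lin_mor by auto
next
  assume "(b,c) \<in> (track_gen C w Fo Fm)\<inverse>"
  then obtain i g j where c: "c = (i,g)" and b: "b = (j, cmp C (Fm (i,j)) g)"
    and g: "g \<in> mor C" "tgt C g = Fo i" and ij: "(i,j) \<in> mor (lin w)"
    unfolding track_gen_def by auto
  have m: "Fm (i,j) \<in> hom C (Fo i) (Fo j)" using path_Fm[OF p ij] .
  have "cmp C (Fm (i,j)) g \<in> hom C (src C g) (tgt C (Fm (i,j)))"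
    using cat g m unfolding category_def hom_def by auto
  then show ?thesis using Pb ij m g unfolding b c Pinv_def hom_def lin_mor by auto
qed

lemma rel_P:
  assumes cat: "category C" and p: "path C w Fo Fm"
    and r: "(a,b) \<in> track_rel C w Fo Fm" and Pa: "Pinv C w Fo s a"
  shows "Pinv C w Fo s b"
  using r Pa unfolding track_rel_def
proof (induction rule: rtrancl_induct)
  case base then show ?case by simp
next
  case (step b c) then show ?case using gen_step_P[OF cat p] by blast
qed

definition mapf where "mapf C f = (\<lambda>(i,g). (i, cmp C g f))"

lemma gen_step_map:
  assumes cat: "category C" and p: "path C w Fo Fm"
    and st: "(b,c) \<in> track_gen C w Fo Fm \<union> (track_gen C w Fo Fm)\<inverse>"
    and Pb: "Pinv C w Fo s b" and f: "f \<in> mor C" "tgt C f = s"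
  shows "(mapf C f b, mapf C f c) \<in> track_gen C w Fo Fm \<union> (track_gen C w Fo Fm)\<inverse>"
  using st
proof
  assume "(b,c) \<in> track_gen C w Fo Fm"
  then obtain i g j where b: "b = (i,g)" and c: "c = (j, cmp C (Fm (i,j)) g)"
    and g: "g \<in> mor C" "tgt C g = Fo i" and ij: "(i,j) \<in> mor (lin w)"
    unfolding track_gen_def by auto
  have m: "Fm (i,j) \<in> hom C (Fo i) (Fo j)" using path_Fm[OF p ij] .
  have sg: "src C g = s" using Pb unfolding b Pinv_def by auto
  have gf: "cmp C g f \<in> hom C (src C f) (tgt C g)"
    using cat g f sg unfolding category_def hom_def by auto
  have as: "cmp C (cmp C (Fm (i,j)) g) f = cmp C (Fm (i,j)) (cmp C g f)"
    using cat g f sg m unfolding category_def hom_def by auto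
  have "(mapf C f b, mapf C f c) \<in> track_gen C w Fo Fm"
    unfolding b c mapf_def track_gen_def using gf g ij as unfolding hom_def by auto
  then show ?thesis by blast
next
  assume "(b,c) \<in> (track_gen C w Fo Fm)\<inverse>"
  then obtain i g j where c: "c = (i,g)" and b: "b = (j, cmp C (Fm (i,j)) g)"
    and g: "g \<in> mor C" "tgt C g = Fo i" and ij: "(i,j) \<in> mor (lin w)"
    unfolding track_gen_def by auto
  have m: "Fm (i,j) \<in> hom C (Fo i) (Fo j)" using path_Fm[OF p ij] .
  have "cmp C (Fm (i,j)) g \<in> hom C (src C g) (tgt C (Fm (i,j)))"
    using cat g m unfolding category_def hom_def by auto
  then have sg: "src C g = s" using Pb unfolding b Pinv_def hom_def by auto
  have gf: "cmp C g f \<in> hom C (src C f) (tgt C g)"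
    using cat g f sg unfolding category_def hom_def by auto
  have as: "cmp C (cmp C (Fm (i,j)) g) f = cmp C (Fm (i,j)) (cmp C g f)"
    using cat g f sg m unfolding category_def hom_def by auto
  have "(mapf C f c, mapf C f b) \<in> track_gen C w Fo Fm"
    unfolding b c mapf_def track_gen_def using gf g ij as unfolding hom_def by auto
  then show ?thesis by blast
qed

lemma rel_map:
  assumes cat: "category C" and p: "path C w Fo Fm"
    and r: "(a,b) \<in> track_rel C w Fo Fm" and Pa: "Pinv C w Fo s a"
    and f: "f \<in> mor C" "tgt C f = s"
  shows "(mapf C f a, mapf C f b) \<in> track_rel C w Fo Fm"
  using r Pa unfolding track_rel_def
proof (induction rule: rtrancl_induct)
  case base then show ?case by simp
next
  case (step b c)
  have "Pinv C w Fo s b" using rel_P[OF cat p _ step.prems] step.hyps(1) unfolding track_rel_def by blast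
  then have "(mapf C f b, mapf C f c) \<in> track_gen C w Fo Fm \<union> (track_gen C w Fo Fm)\<inverse>"
    using gen_step_map[OF cat p step.hyps(2) _ f] by blast
  then show ?case using step by (meson rtrancl.rtrancl_into_rtrancl)
qed

lemma act_formula:
  assumes cat: "category C" and p: "path C w Fo Fm"
    and i: "i \<le> length w" and f: "f \<in> hom C U (Fo i)"
  shows "Act (track_of C w Fo Fm) f (track_rel C w Fo Fm `` {(i, ide C (Fo i))})
       = track_rel C w Fo Fm `` {(i, f)}"
proof -
  let ?R = "track_rel C w Fo Fm"
  have Fo: "Fo i \<in> obj C" using path_Fo[OF p i] .
  have idm: "ide C (Fo i) \<in> hom C (Fo i) (Fo i)" using cat Fo unfolding category_def by auto
  have fm: "f \<in> mor C" "tgt C f = Fo i" "src C f = U" using f unfolding hom_def by auto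
  have ma: "mapf C f (i, ide C (Fo i)) = (i, f)"
    using cat fm unfolding mapf_def category_def by auto
  have Pa: "Pinv C w Fo (Fo i) (i, ide C (Fo i))" using i idm unfolding Pinv_def hom_def by auto
  have act: "Act (track_of C w Fo Fm) f e = ?R `` (mapf C f ` e)" for e
    unfolding track_of_def Let_def mapf_def by simp
  show ?thesis unfolding act
  proof
    show "?R `` (mapf C f ` (?R `` {(i, ide C (Fo i))})) \<subseteq> ?R `` {(i, f)}"
    proof
      fix x assume "x \<in> ?R `` (mapf C f ` (?R `` {(i, ide C (Fo i))}))"
      then obtain b where b: "((i, ide C (Fo i)), b) \<in> ?R" "(mapf C f b, x) \<in> ?R" by auto
      have "((i,f), mapf C f b) \<in> ?R" using rel_map[OF cat p b(1) Pa fm(1,2)] ma by simp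
      then show "x \<in> ?R `` {(i, f)}" using b(2) track_rel_trans by blast
    qed
  next
    show "?R `` {(i, f)} \<subseteq> ?R `` (mapf C f ` (?R `` {(i, ide C (Fo i))}))"
    proof
      fix x assume x: "x \<in> ?R `` {(i, f)}"
      have "(i, ide C (Fo i)) \<in> ?R `` {(i, ide C (Fo i))}" using track_rel_refl by blast
      then have "(i, f) \<in> mapf C f ` (?R `` {(i, ide C (Fo i))})" using ma by (metis image_eqI)
      then show "x \<in> ?R `` (mapf C f ` (?R `` {(i, ide C (Fo i))}))" using x by blast
    qed
  qed
qed



lemma reach_fwd: "w ! i \<in> {S, I} \<Longrightarrow> reach w i (Suc i)"
  unfolding reach_def by (auto simp: le_less_Suc_eq)

lemma reach_bwd: "w ! i = T \<Longrightarrow> reach w (Suc i) i"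
  unfolding reach_def by (auto simp: le_less_Suc_eq)

lemma track_conn:
  assumes dc: "dcategory C" and p: "path C w Fo Fm"
    and inv: "\<forall>f\<in>mor C. \<forall>x\<in>Car (track_of C w Fo Fm) (tgt C f).
        \<kappa> (src C f) (Act (track_of C w Fo Fm) f x) = \<kappa> (tgt C f) x"
    and U: "U \<in> obj C" and x: "x \<in> Car (track_of C w Fo Fm) U"
  shows "\<kappa> U x = \<kappa> (Fo 0) (track_rel C w Fo Fm `` {(0, ide C (Fo 0))})"
proof -
  let ?R = "track_rel C w Fo Fm"
  let ?T = "track_of C w Fo Fm"
  let ?c = "\<lambda>i. ?R `` {(i, ide C (Fo i))}"
  have cat: "category C" using dc unfolding dcategory_def by simp
  have car: "Car ?T V = (if V \<in> obj C then {(i, f). i \<le> length w \<and> f \<in> hom C V (Fo i)} // ?R else {})" for V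
    unfolding track_of_def Let_def by simp
  have cin: "?c i \<in> Car ?T (Fo i)" if "i \<le> length w" for i
  proof -
    have Fo: "Fo i \<in> obj C" using path_Fo[OF p that] .
    have "ide C (Fo i) \<in> hom C (Fo i) (Fo i)" using cat Fo unfolding category_def by auto
    then have "(i, ide C (Fo i)) \<in> {(j, f). j \<le> length w \<and> f \<in> hom C (Fo i) (Fo j)}" using that by simp
    then have "?c i \<in> {(j, f). j \<le> length w \<and> f \<in> hom C (Fo i) (Fo j)} // ?R" by (rule quotientI)
    then show ?thesis unfolding car using Fo by simp
  qed
  have chain: "i \<le> length w \<Longrightarrow> \<kappa> (Fo i) (?c i) = \<kappa> (Fo 0) (?c 0)" for i
  proof (induction i)
    case 0 then show ?case by simp
  next
    case (Suc i)
    have i: "i \<le> length w" using Suc by simp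
    show ?case
    proof (cases "w ! i \<in> {S, I}")
      case True
      have ij: "(i, Suc i) \<in> mor (lin w)" using reach_fwd[OF True] Suc.prems i lin_mor by blast
      have m: "Fm (i, Suc i) \<in> hom C (Fo i) (Fo (Suc i))" using path_Fm[OF p ij] .
      have Foi: "Fo i \<in> obj C" using path_Fo[OF p i] .
      have idi: "ide C (Fo i) \<in> hom C (Fo i) (Fo i)" using cat Foi unfolding category_def by auto
      have eq1: "cmp C (Fm (i, Suc i)) (ide C (Fo i)) = Fm (i, Suc i)"
        using cat m unfolding category_def hom_def by auto
      have "((i, ide C (Fo i)), (Suc i, Fm (i, Suc i))) \<in> track_gen C w Fo Fm"
        unfolding track_gen_def using idi ij eq1 unfolding hom_def by auto
      then have "?c i = ?R `` {(Suc i, Fm (i, Suc i))}" by (rule track_rel_class[OF gen_in_rel])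
      also have "\<dots> = Act ?T (Fm (i, Suc i)) (?c (Suc i))"
        using act_formula[OF cat p Suc.prems m] by simp
      finally have ci: "?c i = Act ?T (Fm (i, Suc i)) (?c (Suc i))" .
      have mm: "Fm (i, Suc i) \<in> mor C" "src C (Fm (i, Suc i)) = Fo i" "tgt C (Fm (i, Suc i)) = Fo (Suc i)"
        using m unfolding hom_def by auto
      have "\<kappa> (src C (Fm (i, Suc i))) (Act ?T (Fm (i, Suc i)) (?c (Suc i))) = \<kappa> (tgt C (Fm (i, Suc i))) (?c (Suc i))"
        using bspec[OF bspec[OF inv mm(1)]] cin[OF Suc.prems] mm(3) by simp
      then have "\<kappa> (Fo i) (?c i) = \<kappa> (Fo (Suc i)) (?c (Suc i))"
        using mm ci by simp
      then show ?thesis using Suc.IH i by simp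
    next
      case False
      then have wT: "w ! i = T" by (cases "w ! i") auto
      have ij: "(Suc i, i) \<in> mor (lin w)" using reach_bwd[OF wT] Suc.prems i lin_mor by blast
      have m: "Fm (Suc i, i) \<in> hom C (Fo (Suc i)) (Fo i)" using path_Fm[OF p ij] .
      have Foi: "Fo (Suc i) \<in> obj C" using path_Fo[OF p Suc.prems] .
      have idi: "ide C (Fo (Suc i)) \<in> hom C (Fo (Suc i)) (Fo (Suc i))" using cat Foi unfolding category_def by auto
      have eq1: "cmp C (Fm (Suc i, i)) (ide C (Fo (Suc i))) = Fm (Suc i, i)"
        using cat m unfolding category_def hom_def by auto
      have "((Suc i, ide C (Fo (Suc i))), (i, Fm (Suc i, i))) \<in> track_gen C w Fo Fm"
        unfolding track_gen_def using idi ij eq1 unfolding hom_def by auto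
      then have "?c (Suc i) = ?R `` {(i, Fm (Suc i, i))}" by (rule track_rel_class[OF gen_in_rel])
      also have "\<dots> = Act ?T (Fm (Suc i, i)) (?c i)"
        using act_formula[OF cat p i m] by simp
      finally have ci: "?c (Suc i) = Act ?T (Fm (Suc i, i)) (?c i)" .
      have mm: "Fm (Suc i, i) \<in> mor C" "src C (Fm (Suc i, i)) = Fo (Suc i)" "tgt C (Fm (Suc i, i)) = Fo i"
        using m unfolding hom_def by auto
      have "\<kappa> (src C (Fm (Suc i, i))) (Act ?T (Fm (Suc i, i)) (?c i)) = \<kappa> (tgt C (Fm (Suc i, i))) (?c i)"
        using bspec[OF bspec[OF inv mm(1)]] cin[OF i] mm(3) by simp
      then have "\<kappa> (Fo (Suc i)) (?c (Suc i)) = \<kappa> (Fo i) (?c i)"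
        using mm ci by simp
      then show ?thesis using Suc.IH i by simp
    qed
  qed
  from x U obtain i f where i: "i \<le> length w" and f: "f \<in> hom C U (Fo i)" and xe: "x = ?R `` {(i, f)}"
    unfolding car by (auto elim!: quotientE)
  have "x = Act ?T f (?c i)" using act_formula[OF cat p i f] xe by simp
  moreover have ff: "f \<in> mor C" "src C f = U" "tgt C f = Fo i" using f unfolding hom_def by auto
  moreover have "\<kappa> (src C f) (Act ?T f (?c i)) = \<kappa> (tgt C f) (?c i)"
    using bspec[OF bspec[OF inv ff(1)]] cin[OF i] ff(3) by simp
  ultimately have "\<kappa> U x = \<kappa> (Fo i) (?c i)" by simp
  then show ?thesis using chain[OF i] by simp
qed

lemma track_conn2:
  assumes dc: "dcategory C" and tr: "is_track C G"
    and inv: "\<forall>f\<in>mor C. \<forall>x\<in>Car G (tgt C f). \<kappa> (src C f) (Act G f x) = \<kappa> (tgt C f) x"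
  shows "\<exists>k. \<forall>U\<in>obj C. \<forall>x\<in>Car G U. \<kappa> U x = k"
proof -
  have cat: "category C" using dc unfolding dcategory_def by simp
  obtain w Fo Fm where p: "path C w Fo Fm" and iso: "aut_iso C G (track_of C w Fo Fm)"
    using tr unfolding is_track_def by blast
  obtain \<eta> \<theta> where e: "aut_mor C G (track_of C w Fo Fm) \<eta>"
    and t: "aut_mor C (track_of C w Fo Fm) G \<theta>"
    and inv1: "\<forall>U \<in> obj C. \<forall>x \<in> Car G U. \<theta> U (\<eta> U x) = x"
    using iso unfolding aut_iso_def by blast
  let ?T = "track_of C w Fo Fm"
  have tcar: "\<forall>U \<in> obj C. \<forall>x \<in> Car ?T U. \<theta> U x \<in> Car G U"
    and tnat: "\<forall>f \<in> mor C. \<forall>x \<in> Car ?T (tgt C f). \<theta> (src C f) (Act ?T f x) = Act G f (\<theta> (tgt C f) x)"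
    using t unfolding aut_mor_def by blast+
  have ecar: "\<forall>U \<in> obj C. \<forall>x \<in> Car G U. \<eta> U x \<in> Car ?T U"
    using e unfolding aut_mor_def by blast
  define \<kappa>' where "\<kappa>' = (\<lambda>U y. \<kappa> U (\<theta> U y))"
  have inv': "\<forall>f\<in>mor C. \<forall>y\<in>Car ?T (tgt C f). \<kappa>' (src C f) (Act ?T f y) = \<kappa>' (tgt C f) y"
  proof (intro ballI)
    fix f y assume f: "f \<in> mor C" and y: "y \<in> Car ?T (tgt C f)"
    have tf: "tgt C f \<in> obj C" using cat f unfolding category_def by blast
    have a: "\<theta> (src C f) (Act ?T f y) = Act G f (\<theta> (tgt C f) y)" using tnat f y by blast
    have b: "\<theta> (tgt C f) y \<in> Car G (tgt C f)" using tcar tf y by blast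
    have "\<kappa> (src C f) (Act G f (\<theta> (tgt C f) y)) = \<kappa> (tgt C f) (\<theta> (tgt C f) y)"
      using bspec[OF bspec[OF inv f] b] .
    then show "\<kappa>' (src C f) (Act ?T f y) = \<kappa>' (tgt C f) y"
      unfolding \<kappa>'_def a by simp
  qed
  show ?thesis
  proof (intro exI ballI)
    fix U x assume U: "U \<in> obj C" and x: "x \<in> Car G U"
    have "\<eta> U x \<in> Car ?T U" using ecar U x by blast
    then have "\<kappa>' U (\<eta> U x) = \<kappa>' (Fo 0) (track_rel C w Fo Fm `` {(0, ide C (Fo 0))})"
      using track_conn[OF dc p inv' U] by blast
    moreover have "\<theta> U (\<eta> U x) = x" using inv1 U x by blast
    ultimately show "\<kappa> U x = \<kappa>' (Fo 0) (track_rel C w Fo Fm `` {(0, ide C (Fo 0))})"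
      unfolding \<kappa>'_def by simp
  qed
qed

lemma track_start:
  assumes tr: "is_track C G" shows "\<exists>U x. (U, x) \<in> Start G"
proof -
  obtain w Fo Fm where iso: "aut_iso C G (track_of C w Fo Fm)"
    using tr unfolding is_track_def by blast
  obtain \<theta> where t: "aut_mor C (track_of C w Fo Fm) G \<theta>"
    using iso unfolding aut_iso_def by blast
  have "(Fo 0, track_rel C w Fo Fm `` {(0, ide C (Fo 0))}) \<in> Start (track_of C w Fo Fm)"
    unfolding track_of_def Let_def by simp
  moreover have "\<forall>(U, x) \<in> Start (track_of C w Fo Fm). (U, \<theta> U x) \<in> Start G"
    using t unfolding aut_mor_def by blast
  ultimately show ?thesis by blast
qed


lemma aut_mor_comp:
  assumes "category C" "aut_mor C D G \<eta>" "aut_mor C G X \<theta>"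
  shows "aut_mor C D X (\<lambda>U x. \<theta> U (\<eta> U x))"
proof -
  have mo: "\<And>f. f \<in> mor C \<Longrightarrow> src C f \<in> obj C \<and> tgt C f \<in> obj C" using assms(1) unfolding category_def by auto
  have e1: "\<forall>U \<in> obj C. \<forall>x \<in> Car D U. \<eta> U x \<in> Car G U"
    and e2: "\<forall>f \<in> mor C. \<forall>x \<in> Car D (tgt C f). \<eta> (src C f) (Act D f x) = Act G f (\<eta> (tgt C f) x)"
    and e3: "\<forall>(U, x) \<in> Start D. (U, \<eta> U x) \<in> Start G"
    and e4: "\<forall>(U, x) \<in> Accept D. (U, \<eta> U x) \<in> Accept G"
    using assms(2) unfolding aut_mor_def by blast+
  have t1: "\<forall>U \<in> obj C. \<forall>x \<in> Car G U. \<theta> U x \<in> Car X U"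
    and t2: "\<forall>f \<in> mor C. \<forall>x \<in> Car G (tgt C f). \<theta> (src C f) (Act G f x) = Act X f (\<theta> (tgt C f) x)"
    and t3: "\<forall>(U, x) \<in> Start G. (U, \<theta> U x) \<in> Start X"
    and t4: "\<forall>(U, x) \<in> Accept G. (U, \<theta> U x) \<in> Accept X"
    using assms(3) unfolding aut_mor_def by blast+
  show ?thesis unfolding aut_mor_def
  proof (intro conjI ballI)
    fix U x assume "U \<in> obj C" "x \<in> Car D U" then show "\<theta> U (\<eta> U x) \<in> Car X U" using e1 t1 by blast
  next
    fix f x assume f: "f \<in> mor C" and x: "x \<in> Car D (tgt C f)"
    have a: "\<eta> (tgt C f) x \<in> Car G (tgt C f)" using e1 mo[OF f] x by blast
    show "\<theta> (src C f) (\<eta> (src C f) (Act D f x)) = Act X f (\<theta> (tgt C f) (\<eta> (tgt C f) x))"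
      using bspec[OF bspec[OF e2 f] x] bspec[OF bspec[OF t2 f] a] by simp
  next
    fix p assume "p \<in> Start D" then show "case p of (U, x) \<Rightarrow> (U, \<theta> U (\<eta> U x)) \<in> Start X"
      using e3 t3 by (cases p) fastforce
  next
    fix p assume "p \<in> Accept D" then show "case p of (U, x) \<Rightarrow> (U, \<theta> U (\<eta> U x)) \<in> Accept X"
      using e4 t4 by (cases p) fastforce
  qed
qed

definition coprod :: "('o, 'm) dcat \<Rightarrow> ('o, 'm, 'e) automaton set \<Rightarrow> ('o, 'm, ('o, 'm, 'e) automaton \<times> 'e) automaton" where
  "coprod C L = \<lparr> Car = (\<lambda>U. if U \<in> obj C then {(G, x). G \<in> L \<and> x \<in> Car G U} else {}),
     Act = (\<lambda>f (G, x). (G, Act G f x)),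
     Start = {(U, (G, x)). G \<in> L \<and> (U, x) \<in> Start G},
     Accept = {(U, (G, x)). G \<in> L \<and> (U, x) \<in> Accept G} \<rparr>"

lemma coprod_aut:
  assumes cat: "category C" and L: "\<forall>G\<in>L. automaton C G"
  shows "automaton C (coprod C L)"
proof -
  have mo: "\<And>f. f \<in> mor C \<Longrightarrow> src C f \<in> obj C \<and> tgt C f \<in> obj C" using cat unfolding category_def by auto
  have cm: "\<And>f g. f \<in> mor C \<Longrightarrow> g \<in> mor C \<Longrightarrow> tgt C f = src C g \<Longrightarrow> tgt C (cmp C g f) = tgt C g"
    using cat unfolding category_def hom_def by auto
  let ?X = "coprod C L"
  have carX: "\<And>U. Car ?X U = (if U \<in> obj C then {(G, x). G \<in> L \<and> x \<in> Car G U} else {})"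
    and actX: "\<And>f G x. Act ?X f (G, x) = (G, Act G f x)"
    and stX: "Start ?X = {(U, (G, x)). G \<in> L \<and> (U, x) \<in> Start G}"
    and acX: "Accept ?X = {(U, (G, x)). G \<in> L \<and> (U, x) \<in> Accept G}"
    unfolding coprod_def by simp_all
  have P: "\<And>G. G \<in> L \<Longrightarrow> presheaf C G" and E: "\<And>G. G \<in> L \<Longrightarrow> Start G \<subseteq> elements C G \<and> Accept G \<subseteq> elements C G"
    using L unfolding automaton_def by auto
  have p1: "\<forall>f \<in> mor C. \<forall>x \<in> Car ?X (tgt C f). Act ?X f x \<in> Car ?X (src C f)"
  proof (intro ballI)
    fix f x assume f: "f \<in> mor C" and x: "x \<in> Car ?X (tgt C f)"
    obtain G y where xy: "x = (G, y)" by (cases x)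
    have G: "G \<in> L" "y \<in> Car G (tgt C f)" using x mo[OF f] unfolding xy carX by auto
    have "Act G f y \<in> Car G (src C f)" using P[OF G(1)] f G(2) unfolding presheaf_def by blast
    then show "Act ?X f x \<in> Car ?X (src C f)" unfolding xy actX carX using mo[OF f] G by simp
  qed
  have p2: "\<forall>a \<in> obj C. \<forall>x \<in> Car ?X a. Act ?X (ide C a) x = x"
  proof (intro ballI)
    fix a x assume a: "a \<in> obj C" and x: "x \<in> Car ?X a"
    obtain G y where xy: "x = (G, y)" by (cases x)
    have G: "G \<in> L" "y \<in> Car G a" using x a unfolding xy carX by auto
    then show "Act ?X (ide C a) x = x" using P[OF G(1)] a unfolding xy actX presheaf_def by simp
  qed
  have p3: "\<forall>f \<in> mor C. \<forall>g \<in> mor C. tgt C f = src C g \<longrightarrow>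
        (\<forall>x \<in> Car ?X (tgt C g). Act ?X (cmp C g f) x = Act ?X f (Act ?X g x))"
  proof (intro ballI impI)
    fix f g x assume f: "f \<in> mor C" and g: "g \<in> mor C" and fg: "tgt C f = src C g" and x: "x \<in> Car ?X (tgt C g)"
    obtain G y where xy: "x = (G, y)" by (cases x)
    have G: "G \<in> L" "y \<in> Car G (tgt C g)" using x mo[OF g] unfolding xy carX by auto
    have "Act G (cmp C g f) y = Act G f (Act G g y)" using P[OF G(1)] f g fg G(2) unfolding presheaf_def by blast
    then show "Act ?X (cmp C g f) x = Act ?X f (Act ?X g x)" unfolding xy actX by simp
  qed
  have e1: "Start ?X \<subseteq> elements C ?X"
  proof
    fix p assume "p \<in> Start ?X"
    then obtain U G x where p: "p = (U, (G, x))" "G \<in> L" "(U, x) \<in> Start G" unfolding stX by auto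
    then have "U \<in> obj C" "x \<in> Car G U" using E[OF p(2)] unfolding elements_def by auto
    then show "p \<in> elements C ?X" unfolding p elements_def carX using p by simp
  qed
  have e2: "Accept ?X \<subseteq> elements C ?X"
  proof
    fix p assume "p \<in> Accept ?X"
    then obtain U G x where p: "p = (U, (G, x))" "G \<in> L" "(U, x) \<in> Accept G" unfolding acX by auto
    then have "U \<in> obj C" "x \<in> Car G U" using E[OF p(2)] unfolding elements_def by auto
    then show "p \<in> elements C ?X" unfolding p elements_def carX using p by simp
  qed
  show ?thesis unfolding automaton_def presheaf_def using p1 p2 p3 e1 e2 by blast
qed

theorem lemma9:
  fixes C :: "('o, 'm) dcat"
  assumes "dcategory C"
  shows "(\<forall>L :: ('o, 'm, 'e) automaton set. is_language C L \<longrightarrow>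
            (\<exists>X :: ('o, 'm, ('o, 'm, 'e) automaton \<times> 'e) automaton.
               automaton C X \<and> Lang C X = L))
       \<and> (\<forall>X :: ('o, 'm, 'x) automaton. automaton C X \<longrightarrow>
            is_language C (Lang C X :: ('o, 'm, 'e) automaton set))"
proof (intro conjI allI impI)
  have cat: "category C" using assms unfolding dcategory_def by simp
  fix X :: "('o, 'm, 'x) automaton"
  assume "automaton C X"
  show "is_language C (Lang C X :: ('o, 'm, 'e) automaton set)"
    unfolding is_language_def
  proof (intro conjI ballI allI impI)
    fix G :: "('o, 'm, 'e) automaton" assume "G \<in> Lang C X"
    then show "is_track C G" unfolding Lang_def by simp
  next
    fix G D :: "('o, 'm, 'e) automaton"
    assume G: "G \<in> Lang C X" and D: "is_track C D \<and> sqsub C D G"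
    obtain \<theta> where th: "aut_mor C G X \<theta>" using G unfolding Lang_def by blast
    obtain \<eta> where et: "aut_mor C D G \<eta>" using D unfolding sqsub_def by blast
    have "aut_mor C D X (\<lambda>U x. \<theta> U (\<eta> U x))" using aut_mor_comp[OF cat et th] .
    then show "D \<in> Lang C X" unfolding Lang_def using D by blast
  qed
next
  have cat: "category C" using assms unfolding dcategory_def by simp
  fix L :: "('o, 'm, 'e) automaton set"
  assume lang: "is_language C L"
  have Ltr: "\<forall>G\<in>L. is_track C G" using lang unfolding is_language_def by blast
  then have La: "\<forall>G\<in>L. automaton C G" unfolding is_track_def by blast
  let ?X = "coprod C L"
  show "\<exists>X :: ('o, 'm, ('o, 'm, 'e) automaton \<times> 'e) automaton. automaton C X \<and> Lang C X = L"
  proof (intro exI conjI)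
    show "automaton C ?X" using coprod_aut[OF cat La] .
    show "Lang C ?X = L"
    proof
      show "L \<subseteq> Lang C ?X"
      proof
        fix G assume G: "G \<in> L"
        have "aut_mor C G ?X (\<lambda>U x. (G, x))"
          unfolding aut_mor_def coprod_def using G by auto
        then show "G \<in> Lang C ?X" unfolding Lang_def using Ltr G by blast
      qed
    next
      show "Lang C ?X \<subseteq> L"
      proof
        fix D :: "('o, 'm, 'e) automaton" assume "D \<in> Lang C ?X"
        then obtain \<eta> where tr: "is_track C D" and e: "aut_mor C D ?X \<eta>" unfolding Lang_def by blast
        have Da: "automaton C D" using tr unfolding is_track_def by blast
        have inv: "\<forall>f\<in>mor C. \<forall>x\<in>Car D (tgt C f). fst (\<eta> (src C f) (Act D f x)) = fst (\<eta> (tgt C f) x)"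
        proof (intro ballI)
          fix f x assume f: "f \<in> mor C" and x: "x \<in> Car D (tgt C f)"
          have "\<eta> (src C f) (Act D f x) = Act ?X f (\<eta> (tgt C f) x)" using e f x unfolding aut_mor_def by blast
          then show "fst (\<eta> (src C f) (Act D f x)) = fst (\<eta> (tgt C f) x)"
            by (cases "\<eta> (tgt C f) x") (simp add: coprod_def)
        qed
        obtain k where k: "\<forall>U\<in>obj C. \<forall>x\<in>Car D U. fst (\<eta> U x) = k"
          using track_conn2[OF assms tr inv] by blast
        obtain U0 x0 where s0: "(U0, x0) \<in> Start D" using track_start[OF tr] by blast
        have s0e: "U0 \<in> obj C" "x0 \<in> Car D U0" using s0 Da unfolding automaton_def elements_def by auto
        have "(U0, \<eta> U0 x0) \<in> Start ?X" using e s0 unfolding aut_mor_def by blast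
        then have "fst (\<eta> U0 x0) \<in> L" by (cases "\<eta> U0 x0") (simp add: coprod_def)
        moreover have "fst (\<eta> U0 x0) = k" using k s0e by blast
        ultimately have kL: "k \<in> L" by simp
        have carX: "\<forall>U\<in>obj C. \<forall>x\<in>Car D U. \<eta> U x = (k, snd (\<eta> U x)) \<and> snd (\<eta> U x) \<in> Car k U"
        proof (intro ballI)
          fix U x assume U: "U \<in> obj C" and x: "x \<in> Car D U"
          have "\<eta> U x \<in> Car ?X U" using e U x unfolding aut_mor_def by blast
          then have m: "\<eta> U x \<in> {(G, y). G \<in> L \<and> y \<in> Car G U}" using U by (simp add: coprod_def)
          have "fst (\<eta> U x) = k" using k U x by blast
          then show "\<eta> U x = (k, snd (\<eta> U x)) \<and> snd (\<eta> U x) \<in> Car k U"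
            using m by (cases "\<eta> U x") simp
        qed
        have mo: "\<And>f. f \<in> mor C \<Longrightarrow> src C f \<in> obj C \<and> tgt C f \<in> obj C" using cat unfolding category_def by auto
        have "aut_mor C D k (\<lambda>U x. snd (\<eta> U x))"
          unfolding aut_mor_def
        proof (intro conjI ballI)
          fix U x assume "U \<in> obj C" "x \<in> Car D U" then show "snd (\<eta> U x) \<in> Car k U" using carX by blast
        next
          fix f x assume f: "f \<in> mor C" and x: "x \<in> Car D (tgt C f)"
          have "\<eta> (src C f) (Act D f x) = Act ?X f (\<eta> (tgt C f) x)" using e f x unfolding aut_mor_def by blast
          also have "\<dots> = Act ?X f (k, snd (\<eta> (tgt C f) x))"
          proof -
            have "tgt C f \<in> obj C" using mo[OF f] by simp
            then have "\<eta> (tgt C f) x = (k, snd (\<eta> (tgt C f) x))" using carX x by blast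
            then show ?thesis by simp
          qed
          finally show "snd (\<eta> (src C f) (Act D f x)) = Act k f (snd (\<eta> (tgt C f) x))"
            unfolding coprod_def by simp
        next
          fix p assume p: "p \<in> Start D"
          obtain U x where px: "p = (U, x)" by (cases p)
          have el: "U \<in> obj C" "x \<in> Car D U" using p Da unfolding px automaton_def elements_def by auto
          have "(U, \<eta> U x) \<in> Start ?X" using e p px unfolding aut_mor_def by blast
          show "case p of (U, x) \<Rightarrow> (U, snd (\<eta> U x)) \<in> Start k"
          proof -
            have "\<eta> U x = (k, snd (\<eta> U x))" using carX el by blast
            then have "(U, (k, snd (\<eta> U x))) \<in> Start ?X" using \<open>(U, \<eta> U x) \<in> Start ?X\<close> by simp
            then show ?thesis unfolding px coprod_def by simp
          qed
        next
          fix p assume p: "p \<in> Accept D"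
          obtain U x where px: "p = (U, x)" by (cases p)
          have el: "U \<in> obj C" "x \<in> Car D U" using p Da unfolding px automaton_def elements_def by auto
          have "(U, \<eta> U x) \<in> Accept ?X" using e p px unfolding aut_mor_def by blast
          show "case p of (U, x) \<Rightarrow> (U, snd (\<eta> U x)) \<in> Accept k"
          proof -
            have "\<eta> U x = (k, snd (\<eta> U x))" using carX el by blast
            then have "(U, (k, snd (\<eta> U x))) \<in> Accept ?X" using \<open>(U, \<eta> U x) \<in> Accept ?X\<close> by simp
            then show ?thesis unfolding px coprod_def by simp
          qed
        qed
        then show "D \<in> L" using lang kL tr unfolding is_language_def sqsub_def by blast
      qed
    qed
  qed
qed

end
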